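(* Let $\mathcal C$ be a cartesian closed category with regular epi-mono factorizations and $S$ an object of $\mathcal C$ having at least one global element $1\to S$. Then for every $T$-algebra $(X,h)$ of the state monad $T$ on $S$, the morphism $e_X^*:X\to Y^S$ (with $Y=L(X,h)$) has a section.
   Context: $U(X)=X^S$, $F(X)=S\times X$, $F\dashv U$, $T=UF$, $TX=(S\times X)^S$. For $f:S\times X\to Z$, $f^*:X\to Z^S$ is its transpose. $\epsilon$ is the counit (evaluation), $\eta_X=(\mathrm{id}_{S\times X})^*$, $\mu_X=(\epsilon_{S\times X})^S$; $q_X:S\times X\to X$ is the second projection. A $T$-algebra is $(X,h)$, $h:TX\to X$, with $h\circ Th=h\circ\mu_X$, $h\circ\eta_X=\mathrm{id}_X$. For a $T$-algebra $(X,h)$, $f_X=h\circ q_{S\times X}^*:S\times X\to X$ is factored as $f_X=m_X\circ e_X$ with $e_X:S\times X\to Y$ a regular epimorphism and $m_X:Y\to X$ a monomorphism; $Y=L(X,h)$ and $e_X^*:X\to Y^S$ is the transpose of $e_X$. *)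

theory Defs
  imports Main
begin

text \<open>A category is given by a set of arrows Arr, domain/codomain maps, composition
  (Comp g f is g after f) and identities; every element of the object type is an object. Exp S Z is the exponential Z^S, Ev S Z : S x Z^S -> Z is the
  counit (evaluation) and Curry S X f : X -> Z^S is the transpose of f : S x X -> Z.\<close>

record ('o, 'm) ccc_data =
  Arr :: "'m set"
  Dom :: "'m \<Rightarrow> 'o"
  Cod :: "'m \<Rightarrow> 'o"
  Comp :: "'m \<Rightarrow> 'm \<Rightarrow> 'm"
  Id :: "'o \<Rightarrow> 'm"
  Term :: 'o
  Bang :: "'o \<Rightarrow> 'm"
  Prod :: "'o \<Rightarrow> 'o \<Rightarrow> 'o"
  Fst :: "'o \<Rightarrow> 'o \<Rightarrow> 'm"
  Snd :: "'o \<Rightarrow> 'o \<Rightarrow> 'm"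
  Pair :: "'m \<Rightarrow> 'm \<Rightarrow> 'm"
  Exp :: "'o \<Rightarrow> 'o \<Rightarrow> 'o"
  Ev :: "'o \<Rightarrow> 'o \<Rightarrow> 'm"
  Curry :: "'o \<Rightarrow> 'o \<Rightarrow> 'm \<Rightarrow> 'm"

definition hom :: "('o, 'm, 'x) ccc_data_scheme \<Rightarrow> 'o \<Rightarrow> 'o \<Rightarrow> 'm set" where
  "hom C A B = {f \<in> Arr C. Dom C f = A \<and> Cod C f = B}"

definition prod_mor :: "('o, 'm, 'x) ccc_data_scheme \<Rightarrow> 'o \<Rightarrow> 'o \<Rightarrow> 'm \<Rightarrow> 'm \<Rightarrow> 'm" where
  "prod_mor C A B f g = Pair C (Comp C f (Fst C A B)) (Comp C g (Snd C A B))"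

locale ccc =
  fixes C :: "('o, 'm, 'x) ccc_data_scheme"
  assumes dom_cod_arr: "f \<in> Arr C \<Longrightarrow> f \<in> hom C (Dom C f) (Cod C f)"
    and id_hom: "Id C A \<in> hom C A A"
    and comp_hom: "f \<in> hom C A B \<Longrightarrow> g \<in> hom C B D \<Longrightarrow> Comp C g f \<in> hom C A D"
    and comp_assoc: "f \<in> hom C A B \<Longrightarrow> g \<in> hom C B D \<Longrightarrow> k \<in> hom C D E \<Longrightarrow>
         Comp C k (Comp C g f) = Comp C (Comp C k g) f"
    and id_left: "f \<in> hom C A B \<Longrightarrow> Comp C (Id C B) f = f"
    and id_right: "f \<in> hom C A B \<Longrightarrow> Comp C f (Id C A) = f"
    and bang_hom: "Bang C A \<in> hom C A (Term C)"
    and bang_unique: "f \<in> hom C A (Term C) \<Longrightarrow> f = Bang C A"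
    and fst_hom: "Fst C A B \<in> hom C (Prod C A B) A"
    and snd_hom: "Snd C A B \<in> hom C (Prod C A B) B"
    and pair_hom: "f \<in> hom C Z A \<Longrightarrow> g \<in> hom C Z B \<Longrightarrow> Pair C f g \<in> hom C Z (Prod C A B)"
    and fst_pair: "f \<in> hom C Z A \<Longrightarrow> g \<in> hom C Z B \<Longrightarrow> Comp C (Fst C A B) (Pair C f g) = f"
    and snd_pair: "f \<in> hom C Z A \<Longrightarrow> g \<in> hom C Z B \<Longrightarrow> Comp C (Snd C A B) (Pair C f g) = g"
    and pair_unique: "k \<in> hom C Z (Prod C A B) \<Longrightarrow>
         k = Pair C (Comp C (Fst C A B) k) (Comp C (Snd C A B) k)"
    and ev_hom: "Ev C S Z \<in> hom C (Prod C S (Exp C S Z)) Z"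
    and curry_hom: "f \<in> hom C (Prod C S X) Z \<Longrightarrow> Curry C S X f \<in> hom C X (Exp C S Z)"
    and ev_curry: "f \<in> hom C (Prod C S X) Z \<Longrightarrow>
         Comp C (Ev C S Z) (prod_mor C S X (Id C S) (Curry C S X f)) = f"
    and curry_unique: "g \<in> hom C X (Exp C S Z) \<Longrightarrow>
         Curry C S X (Comp C (Ev C S Z) (prod_mor C S X (Id C S) g)) = g"

definition is_mono :: "('o, 'm, 'x) ccc_data_scheme \<Rightarrow> 'm \<Rightarrow> bool" where
  "is_mono C m \<longleftrightarrow> m \<in> Arr C \<and>
     (\<forall>A. \<forall>f \<in> hom C A (Dom C m). \<forall>g \<in> hom C A (Dom C m).
        Comp C m f = Comp C m g \<longrightarrow> f = g)"

definition regular_epi :: "('o, 'm, 'x) ccc_data_scheme \<Rightarrow> 'm \<Rightarrow> bool" where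
  "regular_epi C e \<longleftrightarrow> e \<in> Arr C \<and>
     (\<exists>K. \<exists>u \<in> hom C K (Dom C e). \<exists>v \<in> hom C K (Dom C e).
        Comp C e u = Comp C e v \<and>
        (\<forall>Z. \<forall>f \<in> hom C (Dom C e) Z. Comp C f u = Comp C f v \<longrightarrow>
           (\<exists>!k. k \<in> hom C (Cod C e) Z \<and> Comp C k e = f)))"

definition has_regular_epi_mono_factorizations :: "('o, 'm, 'x) ccc_data_scheme \<Rightarrow> bool" where
  "has_regular_epi_mono_factorizations C \<longleftrightarrow>
     (\<forall>f \<in> Arr C. \<exists>Y e m. e \<in> hom C (Dom C f) Y \<and> m \<in> hom C Y (Cod C f) \<and>
        regular_epi C e \<and> is_mono C m \<and> f = Comp C m e)"

definition stT :: "('o, 'm, 'x) ccc_data_scheme \<Rightarrow> 'o \<Rightarrow> 'o \<Rightarrow> 'o" where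
  "stT C S X = Exp C S (Prod C S X)"

text \<open>Action of T on a morphism g : X -> X', namely (S x g)^S.\<close>
definition stT_mor :: "('o, 'm, 'x) ccc_data_scheme \<Rightarrow> 'o \<Rightarrow> 'o \<Rightarrow> 'm \<Rightarrow> 'm" where
  "stT_mor C S X g = Curry C S (stT C S X)
     (Comp C (prod_mor C S X (Id C S) g) (Ev C S (Prod C S X)))"

definition st_eta :: "('o, 'm, 'x) ccc_data_scheme \<Rightarrow> 'o \<Rightarrow> 'o \<Rightarrow> 'm" where
  "st_eta C S X = Curry C S X (Id C (Prod C S X))"

text \<open>mu_X = (eps_{S x X})^S : T T X -> T X\<close>
definition st_mu :: "('o, 'm, 'x) ccc_data_scheme \<Rightarrow> 'o \<Rightarrow> 'o \<Rightarrow> 'm" where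
  "st_mu C S X = Curry C S (stT C S (stT C S X))
     (Comp C (Ev C S (Prod C S X)) (Ev C S (Prod C S (stT C S X))))"

definition T_algebra :: "('o, 'm, 'x) ccc_data_scheme \<Rightarrow> 'o \<Rightarrow> 'o \<Rightarrow> 'm \<Rightarrow> bool" where
  "T_algebra C S X h \<longleftrightarrow> h \<in> hom C (stT C S X) X \<and>
     Comp C h (stT_mor C S (stT C S X) h) = Comp C h (st_mu C S X) \<and>
     Comp C h (st_eta C S X) = Id C X"

text \<open>f_X = h o (q_{S x X})^* : S x X -> X, with q the second projection.\<close>
definition f_alg :: "('o, 'm, 'x) ccc_data_scheme \<Rightarrow> 'o \<Rightarrow> 'o \<Rightarrow> 'm \<Rightarrow> 'm" where
  "f_alg C S X h = Comp C h (Curry C S (Prod C S X) (Snd C S (Prod C S X)))"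

end

theory Submission imports Defs begin

context ccc begin

abbreviation cmp (infixr "\<cdot>" 55) where "g \<cdot> f \<equiv> Comp C g f"

lemma comp_pair:
  assumes f: "f \<in> hom C Z A" and g: "g \<in> hom C Z B" and k: "k \<in> hom C W Z"
  shows "Pair C f g \<cdot> k = Pair C (f \<cdot> k) (g \<cdot> k)"
proof -
  have pk: "Pair C f g \<cdot> k \<in> hom C W (Prod C A B)" using f g k by (meson comp_hom pair_hom)
  have "Fst C A B \<cdot> (Pair C f g \<cdot> k) = f \<cdot> k"
    using comp_assoc[OF k pair_hom[OF f g] fst_hom] fst_pair[OF f g] by simp
  moreover have "Snd C A B \<cdot> (Pair C f g \<cdot> k) = g \<cdot> k"
    using comp_assoc[OF k pair_hom[OF f g] snd_hom] snd_pair[OF f g] by simp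
  ultimately show ?thesis using pair_unique[OF pk] by simp
qed

lemma prod_mor_hom:
  assumes f: "f \<in> hom C A A'" and g: "g \<in> hom C B B'"
  shows "prod_mor C A B f g \<in> hom C (Prod C A B) (Prod C A' B')"
  unfolding prod_mor_def using f g by (meson comp_hom pair_hom fst_hom snd_hom)

lemma prod_mor_pair:
  assumes f: "f \<in> hom C A A'" and g: "g \<in> hom C B B'" and a: "a \<in> hom C W A" and b: "b \<in> hom C W B"
  shows "prod_mor C A B f g \<cdot> Pair C a b = Pair C (f \<cdot> a) (g \<cdot> b)"
proof -
  have ab: "Pair C a b \<in> hom C W (Prod C A B)" using a b by (rule pair_hom)
  have "prod_mor C A B f g \<cdot> Pair C a b = Pair C ((f \<cdot> Fst C A B) \<cdot> Pair C a b) ((g \<cdot> Snd C A B) \<cdot> Pair C a b)"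
    unfolding prod_mor_def using comp_pair[OF comp_hom[OF fst_hom f] comp_hom[OF snd_hom g] ab] .
  also have "\<dots> = Pair C (f \<cdot> a) (g \<cdot> b)"
    using comp_assoc[OF ab fst_hom f, symmetric] comp_assoc[OF ab snd_hom g, symmetric] fst_pair[OF a b] snd_pair[OF a b]
    by simp
  finally show ?thesis .
qed

lemma ev_curry_pt:
  assumes f: "f \<in> hom C (Prod C S X) Z" and s: "s \<in> hom C W S" and k: "k \<in> hom C W X"
  shows "Ev C S Z \<cdot> Pair C s (Curry C S X f \<cdot> k) = f \<cdot> Pair C s k"
proof -
  have "Pair C s (Curry C S X f \<cdot> k) = prod_mor C S X (Id C S) (Curry C S X f) \<cdot> Pair C s k"
    using prod_mor_pair[OF id_hom curry_hom[OF f] s k] id_left[OF s] by simp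
  then show ?thesis
    using comp_assoc[OF pair_hom[OF s k] prod_mor_hom[OF id_hom curry_hom[OF f]] ev_hom] ev_curry[OF f]
    by simp
qed

lemma exp_ext:
  assumes t1: "t1 \<in> hom C W (Exp C S Z)" and t2: "t2 \<in> hom C W (Exp C S Z)"
    and H: "\<And>V s k. s \<in> hom C V S \<Longrightarrow> k \<in> hom C V W \<Longrightarrow>
       Ev C S Z \<cdot> Pair C s (t1 \<cdot> k) = Ev C S Z \<cdot> Pair C s (t2 \<cdot> k)"
  shows "t1 = t2"
proof -
  have pm: "prod_mor C S W (Id C S) t = Pair C (Fst C S W) (t \<cdot> Snd C S W)" if "t \<in> hom C W (Exp C S Z)" for t
    unfolding prod_mor_def using id_left[OF fst_hom] by simp
  have "Ev C S Z \<cdot> prod_mor C S W (Id C S) t1 = Ev C S Z \<cdot> prod_mor C S W (Id C S) t2"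
    using pm[OF t1] pm[OF t2] H[OF fst_hom snd_hom] by simp
  then show ?thesis using curry_unique[OF t1] curry_unique[OF t2] by metis
qed

lemma pair_eta_comp:
  assumes u: "u \<in> hom C (Prod C A B) Z"
  shows "u \<cdot> Pair C (Fst C A B) (Snd C A B) = u"
proof -
  have "Pair C (Fst C A B) (Snd C A B) = Id C (Prod C A B)"
    using pair_unique[OF id_hom] id_right[OF fst_hom] id_right[OF snd_hom] by metis
  then show ?thesis using id_right[OF u] by simp
qed

definition qs :: "'o \<Rightarrow> 'o \<Rightarrow> 'm" where
  "qs S A = Curry C S (Prod C S A) (Snd C S (Prod C S A))"

lemma qs_hom: "qs S A \<in> hom C (Prod C S A) (Exp C S (Prod C S A))"
  unfolding qs_def by (rule curry_hom[OF snd_hom])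

lemma qs_pt:
  assumes z: "z \<in> hom C V (Prod C S A)" and s: "s \<in> hom C V S"
  shows "Ev C S (Prod C S A) \<cdot> Pair C s (qs S A \<cdot> z) = z"
  unfolding qs_def using ev_curry_pt[OF snd_hom s z] snd_pair[OF s z] by simp

lemma T_nat:
  assumes g: "g \<in> hom C A B" and a: "a \<in> hom C W S" and psi: "\<psi> \<in> hom C W A"
  shows "qs S B \<cdot> Pair C a (g \<cdot> \<psi>) = stT_mor C S A g \<cdot> (qs S A \<cdot> Pair C a \<psi>)"
proof -
  define pm where "pm = prod_mor C S A (Id C S) g"
  have pm: "pm \<in> hom C (Prod C S A) (Prod C S B)" unfolding pm_def by (rule prod_mor_hom[OF id_hom g])
  have Tg: "stT_mor C S A g = Curry C S (stT C S A) (pm \<cdot> Ev C S (Prod C S A))"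
    unfolding stT_mor_def pm_def ..
  have pmE: "pm \<cdot> Ev C S (Prod C S A) \<in> hom C (Prod C S (stT C S A)) (Prod C S B)"
    unfolding stT_def using comp_hom[OF ev_hom pm] .
  have Tgh: "stT_mor C S A g \<in> hom C (stT C S A) (Exp C S (Prod C S B))"
    unfolding Tg by (rule curry_hom[OF pmE])
  have p1: "Pair C a (g \<cdot> \<psi>) \<in> hom C W (Prod C S B)" using a g psi by (meson comp_hom pair_hom)
  have p2: "Pair C a \<psi> \<in> hom C W (Prod C S A)" using a psi by (rule pair_hom)
  have q2: "qs S A \<cdot> Pair C a \<psi> \<in> hom C W (stT C S A)" unfolding stT_def using comp_hom[OF p2 qs_hom] .
  show ?thesis
  proof (rule exp_ext)
    show "qs S B \<cdot> Pair C a (g \<cdot> \<psi>) \<in> hom C W (Exp C S (Prod C S B))" using comp_hom[OF p1 qs_hom] .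
    show "stT_mor C S A g \<cdot> (qs S A \<cdot> Pair C a \<psi>) \<in> hom C W (Exp C S (Prod C S B))"
      using comp_hom[OF q2 Tgh] .
    fix V s k assume s: "s \<in> hom C V S" and k: "k \<in> hom C V W"
    have "Ev C S (Prod C S B) \<cdot> Pair C s ((qs S B \<cdot> Pair C a (g \<cdot> \<psi>)) \<cdot> k)
        = Ev C S (Prod C S B) \<cdot> Pair C s (qs S B \<cdot> (Pair C a (g \<cdot> \<psi>) \<cdot> k))"
      using comp_assoc[OF k p1 qs_hom] by simp
    also have "\<dots> = Pair C a (g \<cdot> \<psi>) \<cdot> k" using qs_pt[OF comp_hom[OF k p1] s] .
    finally have L: "Ev C S (Prod C S B) \<cdot> Pair C s ((qs S B \<cdot> Pair C a (g \<cdot> \<psi>)) \<cdot> k) = Pair C a (g \<cdot> \<psi>) \<cdot> k" .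
    have "Ev C S (Prod C S B) \<cdot> Pair C s ((stT_mor C S A g \<cdot> (qs S A \<cdot> Pair C a \<psi>)) \<cdot> k)
       = Ev C S (Prod C S B) \<cdot> Pair C s (stT_mor C S A g \<cdot> ((qs S A \<cdot> Pair C a \<psi>) \<cdot> k))"
      using comp_assoc[OF k q2 Tgh] by simp
    also have "\<dots> = (pm \<cdot> Ev C S (Prod C S A)) \<cdot> Pair C s ((qs S A \<cdot> Pair C a \<psi>) \<cdot> k)"
      unfolding Tg using ev_curry_pt[OF pmE s comp_hom[OF k q2]] .
    also have "\<dots> = pm \<cdot> (Ev C S (Prod C S A) \<cdot> Pair C s ((qs S A \<cdot> Pair C a \<psi>) \<cdot> k))"
      using comp_assoc[OF pair_hom[OF s comp_hom[OF k q2[unfolded stT_def]]] ev_hom pm] by simp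
    also have "(qs S A \<cdot> Pair C a \<psi>) \<cdot> k = qs S A \<cdot> (Pair C a \<psi> \<cdot> k)"
      using comp_assoc[OF k p2 qs_hom] by simp
    also have "Ev C S (Prod C S A) \<cdot> Pair C s (qs S A \<cdot> (Pair C a \<psi> \<cdot> k)) = Pair C a \<psi> \<cdot> k"
      using qs_pt[OF comp_hom[OF k p2] s] .
    also have "pm \<cdot> (Pair C a \<psi> \<cdot> k) = (pm \<cdot> Pair C a \<psi>) \<cdot> k"
      using comp_assoc[OF k p2 pm] .
    also have "pm \<cdot> Pair C a \<psi> = Pair C a (g \<cdot> \<psi>)"
      unfolding pm_def using prod_mor_pair[OF id_hom g a psi] id_left[OF a] by simp
    finally show "Ev C S (Prod C S B) \<cdot> Pair C s ((qs S B \<cdot> Pair C a (g \<cdot> \<psi>)) \<cdot> k) =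
          Ev C S (Prod C S B) \<cdot> Pair C s ((stT_mor C S A g \<cdot> (qs S A \<cdot> Pair C a \<psi>)) \<cdot> k)"
      using L by simp
  qed
qed

lemma mu_q:
  assumes a: "a \<in> hom C W S" and psi: "\<psi> \<in> hom C W (stT C S X)"
  shows "st_mu C S X \<cdot> (qs S (stT C S X) \<cdot> Pair C a \<psi>) = qs S X \<cdot> (Ev C S (Prod C S X) \<cdot> Pair C a \<psi>)"
proof -
  define E1 where "E1 = Ev C S (Prod C S X)"
  define E2 where "E2 = Ev C S (Prod C S (stT C S X))"
  have E1: "E1 \<in> hom C (Prod C S (stT C S X)) (Prod C S X)" unfolding E1_def stT_def by (rule ev_hom)
  have E2: "E2 \<in> hom C (Prod C S (stT C S (stT C S X))) (Prod C S (stT C S X))"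
    unfolding E2_def stT_def by (rule ev_hom)
  have EE: "E1 \<cdot> E2 \<in> hom C (Prod C S (stT C S (stT C S X))) (Prod C S X)" using comp_hom[OF E2 E1] .
  have mu: "st_mu C S X = Curry C S (stT C S (stT C S X)) (E1 \<cdot> E2)" unfolding st_mu_def E1_def E2_def ..
  have muh: "st_mu C S X \<in> hom C (stT C S (stT C S X)) (stT C S X)"
    unfolding mu using curry_hom[OF EE] unfolding stT_def .
  have p2: "Pair C a \<psi> \<in> hom C W (Prod C S (stT C S X))" using a psi by (rule pair_hom)
  have q2: "qs S (stT C S X) \<cdot> Pair C a \<psi> \<in> hom C W (stT C S (stT C S X))"
    using comp_hom[OF p2 qs_hom] unfolding stT_def .
  have z: "E1 \<cdot> Pair C a \<psi> \<in> hom C W (Prod C S X)" using comp_hom[OF p2 E1] .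
  show ?thesis unfolding E1_def[symmetric]
  proof (rule exp_ext)
    show "st_mu C S X \<cdot> (qs S (stT C S X) \<cdot> Pair C a \<psi>) \<in> hom C W (Exp C S (Prod C S X))"
      using comp_hom[OF q2 muh] unfolding stT_def .
    show "qs S X \<cdot> (E1 \<cdot> Pair C a \<psi>) \<in> hom C W (Exp C S (Prod C S X))" using comp_hom[OF z qs_hom] .
    fix V s k assume s: "s \<in> hom C V S" and k: "k \<in> hom C V W"
    have "Ev C S (Prod C S X) \<cdot> Pair C s ((st_mu C S X \<cdot> (qs S (stT C S X) \<cdot> Pair C a \<psi>)) \<cdot> k)
       = Ev C S (Prod C S X) \<cdot> Pair C s (st_mu C S X \<cdot> ((qs S (stT C S X) \<cdot> Pair C a \<psi>) \<cdot> k))"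
      using comp_assoc[OF k q2 muh] by simp
    also have "\<dots> = (E1 \<cdot> E2) \<cdot> Pair C s ((qs S (stT C S X) \<cdot> Pair C a \<psi>) \<cdot> k)"
      unfolding mu using ev_curry_pt[OF EE s comp_hom[OF k q2]] .
    also have "\<dots> = E1 \<cdot> (E2 \<cdot> Pair C s ((qs S (stT C S X) \<cdot> Pair C a \<psi>) \<cdot> k))"
      using comp_assoc[OF pair_hom[OF s comp_hom[OF k q2]] E2 E1] by simp
    also have "(qs S (stT C S X) \<cdot> Pair C a \<psi>) \<cdot> k = qs S (stT C S X) \<cdot> (Pair C a \<psi> \<cdot> k)"
      using comp_assoc[OF k p2 qs_hom] by simp
    also have "E2 \<cdot> Pair C s (qs S (stT C S X) \<cdot> (Pair C a \<psi> \<cdot> k)) = Pair C a \<psi> \<cdot> k"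
      unfolding E2_def using qs_pt[OF comp_hom[OF k p2] s] .
    also have "E1 \<cdot> (Pair C a \<psi> \<cdot> k) = (E1 \<cdot> Pair C a \<psi>) \<cdot> k" using comp_assoc[OF k p2 E1] .
    also have "\<dots> = Ev C S (Prod C S X) \<cdot> Pair C s (qs S X \<cdot> ((E1 \<cdot> Pair C a \<psi>) \<cdot> k))"
      using qs_pt[OF comp_hom[OF k z] s] by simp
    also have "qs S X \<cdot> ((E1 \<cdot> Pair C a \<psi>) \<cdot> k) = (qs S X \<cdot> (E1 \<cdot> Pair C a \<psi>)) \<cdot> k"
      using comp_assoc[OF k z qs_hom] .
    finally show "Ev C S (Prod C S X) \<cdot> Pair C s ((st_mu C S X \<cdot> (qs S (stT C S X) \<cdot> Pair C a \<psi>)) \<cdot> k) =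
         Ev C S (Prod C S X) \<cdot> Pair C s ((qs S X \<cdot> (E1 \<cdot> Pair C a \<psi>)) \<cdot> k)" .
  qed
qed

lemma alg_K:
  assumes alg: "T_algebra C S X h" and a: "a \<in> hom C W S" and psi: "\<psi> \<in> hom C W (stT C S X)"
  shows "h \<cdot> (qs S X \<cdot> Pair C a (h \<cdot> \<psi>)) = h \<cdot> (qs S X \<cdot> (Ev C S (Prod C S X) \<cdot> Pair C a \<psi>))"
proof -
  have h: "h \<in> hom C (stT C S X) X" and law: "h \<cdot> stT_mor C S (stT C S X) h = h \<cdot> st_mu C S X"
    using alg unfolding T_algebra_def by auto
  have p2: "Pair C a \<psi> \<in> hom C W (Prod C S (stT C S X))" using a psi by (rule pair_hom)
  have q2: "qs S (stT C S X) \<cdot> Pair C a \<psi> \<in> hom C W (stT C S (stT C S X))"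
    using comp_hom[OF p2 qs_hom] unfolding stT_def .
  have Th: "stT_mor C S (stT C S X) h \<in> hom C (stT C S (stT C S X)) (stT C S X)"
    unfolding stT_mor_def stT_def
    by (rule curry_hom, rule comp_hom[OF ev_hom], rule prod_mor_hom[OF id_hom h[unfolded stT_def]])
  have muh: "st_mu C S X \<in> hom C (stT C S (stT C S X)) (stT C S X)"
    unfolding st_mu_def stT_def
    by (rule curry_hom, rule comp_hom[OF ev_hom ev_hom])
  have "h \<cdot> (qs S X \<cdot> Pair C a (h \<cdot> \<psi>)) = h \<cdot> (stT_mor C S (stT C S X) h \<cdot> (qs S (stT C S X) \<cdot> Pair C a \<psi>))"
    using T_nat[OF h a psi] by simp
  also have "\<dots> = (h \<cdot> stT_mor C S (stT C S X) h) \<cdot> (qs S (stT C S X) \<cdot> Pair C a \<psi>)"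
    using comp_assoc[OF q2 Th h] .
  also have "\<dots> = h \<cdot> (st_mu C S X \<cdot> (qs S (stT C S X) \<cdot> Pair C a \<psi>))"
    using law comp_assoc[OF q2 muh h] by simp
  also have "\<dots> = h \<cdot> (qs S X \<cdot> (Ev C S (Prod C S X) \<cdot> Pair C a \<psi>))"
    using mu_q[OF a psi] by simp
  finally show ?thesis .
qed

lemma alg_F':
  assumes alg: "T_algebra C S X h" and a: "a \<in> hom C W S" and z: "z \<in> hom C W (Prod C S X)"
  shows "h \<cdot> (qs S X \<cdot> Pair C a (h \<cdot> (qs S X \<cdot> z))) = h \<cdot> (qs S X \<cdot> z)"
proof -
  have psi: "qs S X \<cdot> z \<in> hom C W (stT C S X)" unfolding stT_def using comp_hom[OF z qs_hom] .
  show ?thesis using alg_K[OF alg a psi] qs_pt[OF z a] by simp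
qed

lemma regepi_epi:
  assumes re: "regular_epi C e" and e: "e \<in> hom C A Y" and g1: "g1 \<in> hom C Y Z" and g2: "g2 \<in> hom C Y Z"
    and eq: "g1 \<cdot> e = g2 \<cdot> e"
  shows "g1 = g2"
proof -
  have de: "Dom C e = A" "Cod C e = Y" using e unfolding hom_def by auto
  obtain K u v where u: "u \<in> hom C K A" and v: "v \<in> hom C K A" and uv: "e \<cdot> u = e \<cdot> v"
    and U: "\<forall>Z. \<forall>f \<in> hom C A Z. f \<cdot> u = f \<cdot> v \<longrightarrow> (\<exists>!k. k \<in> hom C Y Z \<and> k \<cdot> e = f)"
    using re unfolding regular_epi_def de by blast
  have f: "g1 \<cdot> e \<in> hom C A Z" using comp_hom[OF e g1] .
  have "(g1 \<cdot> e) \<cdot> u = (g1 \<cdot> e) \<cdot> v"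
    using comp_assoc[OF u e g1, symmetric] comp_assoc[OF v e g1, symmetric] uv by (simp only:)
  then have "\<exists>!k. k \<in> hom C Y Z \<and> k \<cdot> e = g1 \<cdot> e" using U f by simp
  then show ?thesis using g1 g2 eq by (metis (no_types, lifting))
qed

lemma curry_nat:
  assumes c: "c \<in> hom C (Prod C S Y) Z" and e: "e \<in> hom C A Y"
  shows "Curry C S A (c \<cdot> prod_mor C S A (Id C S) e) = Curry C S Y c \<cdot> e"
proof -
  have Cc: "Curry C S Y c \<in> hom C Y (Exp C S Z)" using curry_hom[OF c] .
  have g: "Curry C S Y c \<cdot> e \<in> hom C A (Exp C S Z)" using comp_hom[OF e Cc] .
  have pme: "prod_mor C S A (Id C S) e \<in> hom C (Prod C S A) (Prod C S Y)" using prod_mor_hom[OF id_hom e] .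
  have pmc: "prod_mor C S Y (Id C S) (Curry C S Y c) \<in> hom C (Prod C S Y) (Prod C S (Exp C S Z))"
    using prod_mor_hom[OF id_hom Cc] .
  have i1: "Id C S \<cdot> Fst C S A \<in> hom C (Prod C S A) S" using comp_hom[OF fst_hom id_hom] .
  have i2: "e \<cdot> Snd C S A \<in> hom C (Prod C S A) Y" using comp_hom[OF snd_hom e] .
  have "prod_mor C S Y (Id C S) (Curry C S Y c) \<cdot> prod_mor C S A (Id C S) e
      = Pair C (Id C S \<cdot> (Id C S \<cdot> Fst C S A)) (Curry C S Y c \<cdot> (e \<cdot> Snd C S A))"
    unfolding prod_mor_def[of C S A] using prod_mor_pair[OF id_hom Cc i1 i2] by simp
  also have "\<dots> = prod_mor C S A (Id C S) (Curry C S Y c \<cdot> e)"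
    unfolding prod_mor_def using id_left[OF i1] comp_assoc[OF snd_hom e Cc] by simp
  finally have P: "prod_mor C S Y (Id C S) (Curry C S Y c) \<cdot> prod_mor C S A (Id C S) e = prod_mor C S A (Id C S) (Curry C S Y c \<cdot> e)" .
  have "Ev C S Z \<cdot> prod_mor C S A (Id C S) (Curry C S Y c \<cdot> e) = c \<cdot> prod_mor C S A (Id C S) e"
    using P comp_assoc[OF pme pmc ev_hom] ev_curry[OF c] by simp
  then show ?thesis using curry_unique[OF g] by simp
qed

lemma prod_epi:
  assumes re: "regular_epi C e" and e: "e \<in> hom C A Y"
    and u1: "u1 \<in> hom C (Prod C S Y) Z" and u2: "u2 \<in> hom C (Prod C S Y) Z"
    and eq: "u1 \<cdot> prod_mor C S A (Id C S) e = u2 \<cdot> prod_mor C S A (Id C S) e"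
  shows "u1 = u2"
proof -
  have "Curry C S Y u1 \<cdot> e = Curry C S Y u2 \<cdot> e" using curry_nat[OF u1 e, symmetric] curry_nat[OF u2 e, symmetric] eq by (simp only:)
  then have cc: "Curry C S Y u1 = Curry C S Y u2" using regepi_epi[OF re e curry_hom[OF u1] curry_hom[OF u2]] by blast
  have "u1 = Ev C S Z \<cdot> prod_mor C S Y (Id C S) (Curry C S Y u1)" using ev_curry[OF u1] by simp
  also have "\<dots> = u2" using ev_curry[OF u2] cc by simp
  finally show ?thesis .
qed

lemma alg_F:
  assumes alg: "T_algebra C S X h" and re: "regular_epi C e" and e: "e \<in> hom C (Prod C S X) Y"
    and m: "m \<in> hom C Y X" and fe: "h \<cdot> qs S X = m \<cdot> e"
  shows "(h \<cdot> qs S X) \<cdot> prod_mor C S Y (Id C S) m = m \<cdot> Snd C S Y"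
proof -
  define A where "A = Prod C S X"
  have h: "h \<in> hom C (stT C S X) X" using alg unfolding T_algebra_def by auto
  have f: "h \<cdot> qs S X \<in> hom C (Prod C S X) X" using comp_hom[OF qs_hom h[unfolded stT_def]] .
  have PM: "prod_mor C S Y (Id C S) m \<in> hom C (Prod C S Y) (Prod C S X)" using prod_mor_hom[OF id_hom m] .
  have pme: "prod_mor C S A (Id C S) e \<in> hom C (Prod C S A) (Prod C S Y)" using prod_mor_hom[OF id_hom e[folded A_def]] .
  have i1: "Id C S \<cdot> Fst C S A \<in> hom C (Prod C S A) S" using comp_hom[OF fst_hom id_hom] .
  have i2: "e \<cdot> Snd C S A \<in> hom C (Prod C S A) Y" using comp_hom[OF snd_hom e[folded A_def]] .
  have pmeq: "prod_mor C S A (Id C S) e = Pair C (Id C S \<cdot> Fst C S A) (e \<cdot> Snd C S A)"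
    unfolding prod_mor_def ..
  have s2: "Snd C S A \<in> hom C (Prod C S A) (Prod C S X)" unfolding A_def by (rule snd_hom)
  have a1: "prod_mor C S Y (Id C S) m \<cdot> prod_mor C S A (Id C S) e = Pair C (Fst C S A) ((h \<cdot> qs S X) \<cdot> Snd C S A)"
    unfolding pmeq using prod_mor_pair[OF id_hom m i1 i2] id_left[OF i1] id_left[OF fst_hom]
      comp_assoc[OF snd_hom e[folded A_def] m] fe by simp
  have "((h \<cdot> qs S X) \<cdot> prod_mor C S Y (Id C S) m) \<cdot> prod_mor C S A (Id C S) e
      = (h \<cdot> qs S X) \<cdot> (prod_mor C S Y (Id C S) m \<cdot> prod_mor C S A (Id C S) e)"
    using comp_assoc[OF pme PM f] by simp
  also have "\<dots> = (h \<cdot> qs S X) \<cdot> Pair C (Fst C S A) (h \<cdot> (qs S X \<cdot> Snd C S A))"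
    unfolding a1 using comp_assoc[OF s2 qs_hom h[unfolded stT_def]] by simp
  also have "\<dots> = h \<cdot> (qs S X \<cdot> Pair C (Fst C S A) (h \<cdot> (qs S X \<cdot> Snd C S A)))"
    using comp_assoc[OF pair_hom[OF fst_hom comp_hom[OF comp_hom[OF s2 qs_hom] h[unfolded stT_def]]] qs_hom h[unfolded stT_def]] by simp
  also have "\<dots> = h \<cdot> (qs S X \<cdot> Snd C S A)" using alg_F'[OF alg fst_hom s2] .
  also have "\<dots> = (m \<cdot> e) \<cdot> Snd C S A" using comp_assoc[OF s2 qs_hom h[unfolded stT_def]] fe by simp
  also have "\<dots> = m \<cdot> (e \<cdot> Snd C S A)" using comp_assoc[OF snd_hom e[folded A_def] m] by simp
  also have "e \<cdot> Snd C S A = Snd C S Y \<cdot> prod_mor C S A (Id C S) e"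
    unfolding pmeq using snd_pair[OF i1 i2] by simp
  also have "m \<cdot> (Snd C S Y \<cdot> prod_mor C S A (Id C S) e) = (m \<cdot> Snd C S Y) \<cdot> prod_mor C S A (Id C S) e"
    using comp_assoc[OF pme snd_hom m] .
  finally show ?thesis
    using prod_epi[OF re e[folded A_def] comp_hom[OF PM f] comp_hom[OF snd_hom m]] by blast
qed

lemma main_sec:
  assumes alg: "T_algebra C S X h"
    and e: "e \<in> hom C (Prod C S X) Y" and re: "regular_epi C e"
    and m: "m \<in> hom C Y X" and mono: "is_mono C m"
    and fe: "f_alg C S X h = m \<cdot> e"
  shows "\<exists>s \<in> hom C (Exp C S Y) X. Curry C S X e \<cdot> s = Id C (Exp C S Y)"
proof -
  define YS where "YS = Exp C S Y"
  define P where "P = Pair C (Fst C S YS) (m \<cdot> Ev C S Y)"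
  define CP where "CP = Curry C S YS P"
  define PM where "PM = prod_mor C S Y (Id C S) m"
  have fe': "h \<cdot> qs S X = m \<cdot> e" using fe unfolding f_alg_def qs_def .
  have h: "h \<in> hom C (Exp C S (Prod C S X)) X" using alg unfolding T_algebra_def stT_def by auto
  have P: "P \<in> hom C (Prod C S YS) (Prod C S X)" unfolding P_def YS_def
    by (rule pair_hom[OF fst_hom comp_hom[OF ev_hom m]])
  have CP: "CP \<in> hom C YS (Exp C S (Prod C S X))" unfolding CP_def by (rule curry_hom[OF P])
  have sig: "h \<cdot> CP \<in> hom C YS X" using comp_hom[OF CP h] .
  have Ce: "Curry C S X e \<in> hom C X YS" unfolding YS_def by (rule curry_hom[OF e])
  have PMh: "PM \<in> hom C (Prod C S Y) (Prod C S X)" unfolding PM_def using prod_mor_hom[OF id_hom m] .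
  have F: "(h \<cdot> qs S X) \<cdot> PM = m \<cdot> Snd C S Y" unfolding PM_def using alg_F[OF alg re e m fe'] .
  have f: "h \<cdot> qs S X \<in> hom C (Prod C S X) X" using comp_hom[OF qs_hom h] .
  have "Curry C S X e \<cdot> (h \<cdot> CP) = Id C YS"
  proof (rule exp_ext[where S=S and Z=Y, folded YS_def])
    show "Curry C S X e \<cdot> (h \<cdot> CP) \<in> hom C YS YS" using comp_hom[OF sig Ce] .
    show "Id C YS \<in> hom C YS YS" by (rule id_hom)
    fix V s k assume s: "s \<in> hom C V S" and k: "k \<in> hom C V YS"
    define y where "y = Ev C S Y \<cdot> Pair C s k"
    have y: "y \<in> hom C V Y" unfolding y_def using comp_hom[OF pair_hom[OF s k[unfolded YS_def]] ev_hom] .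
    have sk: "(h \<cdot> CP) \<cdot> k \<in> hom C V X" using comp_hom[OF k sig] .
    have psi: "CP \<cdot> k \<in> hom C V (stT C S X)" unfolding stT_def using comp_hom[OF k CP] .
    have R: "Ev C S Y \<cdot> Pair C s (Id C YS \<cdot> k) = y" unfolding y_def using id_left[OF k] by simp
    have "Ev C S Y \<cdot> Pair C s ((Curry C S X e \<cdot> (h \<cdot> CP)) \<cdot> k) = Ev C S Y \<cdot> Pair C s (Curry C S X e \<cdot> ((h \<cdot> CP) \<cdot> k))"
      using comp_assoc[OF k sig Ce] by simp
    also have "\<dots> = e \<cdot> Pair C s ((h \<cdot> CP) \<cdot> k)" using ev_curry_pt[OF e s sk] .
    finally have L: "Ev C S Y \<cdot> Pair C s ((Curry C S X e \<cdot> (h \<cdot> CP)) \<cdot> k) = e \<cdot> Pair C s ((h \<cdot> CP) \<cdot> k)" .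
    have ep: "e \<cdot> Pair C s ((h \<cdot> CP) \<cdot> k) \<in> hom C V Y" using comp_hom[OF pair_hom[OF s sk] e] .
    have EP: "Ev C S (Prod C S X) \<cdot> Pair C s (CP \<cdot> k) = PM \<cdot> Pair C s y"
    proof -
      have "Ev C S (Prod C S X) \<cdot> Pair C s (CP \<cdot> k) = P \<cdot> Pair C s k"
        unfolding CP_def using ev_curry_pt[OF P s k] .
      also have "\<dots> = Pair C (Fst C S YS \<cdot> Pair C s k) ((m \<cdot> Ev C S Y) \<cdot> Pair C s k)"
        unfolding P_def using comp_pair[OF fst_hom comp_hom[OF ev_hom m] pair_hom[OF s k[unfolded YS_def]]]
        unfolding YS_def .
      also have "\<dots> = Pair C s (m \<cdot> y)"
        unfolding y_def using fst_pair[OF s k] comp_assoc[OF pair_hom[OF s k[unfolded YS_def]] ev_hom m] by simp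
      also have "\<dots> = PM \<cdot> Pair C s y"
        unfolding PM_def using prod_mor_pair[OF id_hom m s y] id_left[OF s] by simp
      finally show ?thesis .
    qed
    have "m \<cdot> (e \<cdot> Pair C s ((h \<cdot> CP) \<cdot> k)) = (m \<cdot> e) \<cdot> Pair C s ((h \<cdot> CP) \<cdot> k)"
      using comp_assoc[OF pair_hom[OF s sk] e m] .
    also have "\<dots> = h \<cdot> (qs S X \<cdot> Pair C s ((h \<cdot> CP) \<cdot> k))"
      using fe' comp_assoc[OF pair_hom[OF s sk] qs_hom h] by simp
    also have "(h \<cdot> CP) \<cdot> k = h \<cdot> (CP \<cdot> k)" using comp_assoc[OF k CP h] by simp
    also have "h \<cdot> (qs S X \<cdot> Pair C s (h \<cdot> (CP \<cdot> k))) = h \<cdot> (qs S X \<cdot> (Ev C S (Prod C S X) \<cdot> Pair C s (CP \<cdot> k)))"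
      using alg_K[OF alg s psi] .
    also have "\<dots> = (h \<cdot> qs S X) \<cdot> (PM \<cdot> Pair C s y)"
      unfolding EP using comp_assoc[OF comp_hom[OF pair_hom[OF s y] PMh] qs_hom h] .
    also have "\<dots> = ((h \<cdot> qs S X) \<cdot> PM) \<cdot> Pair C s y" using comp_assoc[OF pair_hom[OF s y] PMh f] .
    also have "\<dots> = m \<cdot> (Snd C S Y \<cdot> Pair C s y)" unfolding F using comp_assoc[OF pair_hom[OF s y] snd_hom m] by simp
    also have "\<dots> = m \<cdot> y" using snd_pair[OF s y] by simp
    finally have mm0: "m \<cdot> (e \<cdot> Pair C s (h \<cdot> (CP \<cdot> k))) = m \<cdot> y" .
    have mm: "m \<cdot> (e \<cdot> Pair C s ((h \<cdot> CP) \<cdot> k)) = m \<cdot> y"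
      using mm0 comp_assoc[OF k CP h] by simp
    have dm: "Dom C m = Y" using m unfolding hom_def by auto
    have "e \<cdot> Pair C s ((h \<cdot> CP) \<cdot> k) = y"
      using mono mm ep y unfolding is_mono_def dm by blast
    then show "Ev C S Y \<cdot> Pair C s ((Curry C S X e \<cdot> (h \<cdot> CP)) \<cdot> k) = Ev C S Y \<cdot> Pair C s (Id C YS \<cdot> k)"
      using L R by simp
  qed
  then show ?thesis using sig unfolding YS_def by blast
qed

end

theorem mainTheorem8:
  fixes C :: "('o, 'm) ccc_data"
  assumes "ccc C"
    and "has_regular_epi_mono_factorizations C"
    and "\<exists>p. p \<in> hom C (Term C) S"
    and "T_algebra C S X h"
    and "e \<in> hom C (Prod C S X) Y" and "regular_epi C e"
    and "m \<in> hom C Y X" and "is_mono C m"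
    and "f_alg C S X h = Comp C m e"
  shows "\<exists>s \<in> hom C (Exp C S Y) X. Comp C (Curry C S X e) s = Id C (Exp C S Y)"
  using ccc.main_sec[OF assms(1) assms(4-9)] .

end
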